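(* Let $n\ge 2$, $\lambda\in[0,(n-1)^2/4]$, and let $h$, $d_0$ be as follows: $h:(0,\infty)\to\mathbb{R}$ solves $h''+(n-1)\tanh(d)h'=-\lambda h$, is positive and decreasing on $[d_0,\infty)$, and satisfies $h(d)<C_3e^{-rd}$ for $d>d_0$, where $r=\frac{n-1}{2}+\frac{n-1}{2}\sqrt{1-4\lambda/(n-1)^2}$. In the Poincaré ball model $B$, for $z\in\partial B$ and $\theta>0$ let $I=I(z,\theta,0)$ be the totally geodesic hyperball whose closure meets $\partial B$ exactly in the closed cap $\{y\in\partial B:\angle(y,z)\le\theta/2\}$, and let $w_I(x)=h(\sigma(x))/h(d_0)$, where $\sigma(x)$ is the hyperbolic distance from $x$ to $\partial I$ taken with positive sign on the side of $\partial I$ containing $0$. Then there exist constants $C_4>0$ and $\theta_1>0$ (independent of $z$) such that $$0<w_I(0)\le C_4\,\theta^{(n-1)/2}\quad\text{for all }0<\theta<\theta_1.$$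
   Context: The Poincaré ball model is $B=\{p\in\mathbb{R}^n:|p|<1\}$ with metric $\frac{4}{(1-|p|^2)^2}\delta_{ij}$ and ideal boundary $\partial B$; totally geodesic hyperballs are regions bounded by totally geodesic hyperspheres (Euclidean spheres orthogonal to $\partial B$ intersected with $B$). The function $x\mapsto h(\sigma(x))$ satisfies $-\Delta u=\lambda u$ where $\sigma$ ranges in $(0,\infty)$. *)

theory Defs
  imports "HOL-Analysis.Analysis"
begin

definition pball :: "('a::euclidean_space) set" where
  "pball = ball 0 1"

definition pbdry :: "('a::euclidean_space) set" where
  "pbdry = sphere 0 1"

text \<open>Hyperbolic distance of the metric 4/(1-|p|^2)^2 delta_ij.\<close>
definition hdist :: "'a::euclidean_space \<Rightarrow> 'a \<Rightarrow> real" where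
  "hdist x y = arcosh (1 + 2 * (norm (x - y))\<^sup>2 / ((1 - (norm x)\<^sup>2) * (1 - (norm y)\<^sup>2)))"

definition eangle :: "'a::euclidean_space \<Rightarrow> 'a \<Rightarrow> real" where
  "eangle y z = arccos ((y \<bullet> z) / (norm y * norm z))"

text \<open>Totally geodesic hyperballs: regions of B bounded by a Euclidean sphere
  S(c,rho) orthogonal to the unit sphere (|c|^2 = 1 + rho^2), i.e. one of the two
  sides of the totally geodesic hypersphere S(c,rho) \<inter> B.\<close>
definition tg_hyperball :: "'a::euclidean_space set \<Rightarrow> bool" where
  "tg_hyperball I \<longleftrightarrow> (\<exists>c rho. rho > 0 \<and> (norm c)\<^sup>2 = 1 + rho\<^sup>2 \<and>
      (I = {x \<in> pball. dist x c < rho} \<or> I = {x \<in> pball. dist x c > rho}))"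

definition cap :: "'a::euclidean_space \<Rightarrow> real \<Rightarrow> 'a set" where
  "cap z \<theta> = {y \<in> pbdry. eangle y z \<le> \<theta> / 2}"

definition is_I :: "'a::euclidean_space set \<Rightarrow> 'a \<Rightarrow> real \<Rightarrow> bool" where
  "is_I I z \<theta> \<longleftrightarrow> tg_hyperball I \<and> closure I \<inter> pbdry = cap z \<theta>"

definition hbdry :: "'a::euclidean_space set \<Rightarrow> 'a set" where
  "hbdry I = frontier I \<inter> pball"

definition sigma :: "'a::euclidean_space set \<Rightarrow> 'a \<Rightarrow> real" where
  "sigma I x = (if (x \<in> I \<longleftrightarrow> 0 \<in> I) then 1 else -1) * (INF y\<in>hbdry I. hdist x y)"

definition wI :: "(real \<Rightarrow> real) \<Rightarrow> real \<Rightarrow> 'a::euclidean_space set \<Rightarrow> 'a \<Rightarrow> real" where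
  "wI h d0 I x = h (sigma I x) / h d0"

end

theory Submission
  imports Defs
begin

lemma unit_orth:
  fixes u :: "'a::euclidean_space"
  assumes "2 \<le> DIM('a)"
  obtains v where "norm v = 1" "v \<bullet> u = 0"
proof -
  obtain y where "y \<noteq> 0" "orthogonal u y" using orthogonal_to_vector_exists[OF assms] by blast
  then show ?thesis
    using that[of "y /\<^sub>R norm y"] by (auto simp: orthogonal_def inner_commute[of y u])
qed

lemma closure_radial:
  fixes w :: "'a::real_normed_vector"
  assumes "norm w = 1" "e0 > 0" "\<And>\<epsilon>. 0 < \<epsilon> \<Longrightarrow> \<epsilon> < e0 \<Longrightarrow> (1 - \<epsilon>) *\<^sub>R w \<in> S"
  shows "w \<in> closure S"
  unfolding closure_approachable
proof (intro allI impI)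
  fix e :: real assume e: "e > 0"
  define \<epsilon> where "\<epsilon> = min (e0/2) (e/2)"
  have "0 < \<epsilon>" "\<epsilon> < e0" "\<epsilon> < e" using e assms(2) by (auto simp: \<epsilon>_def)
  moreover have "dist ((1 - \<epsilon>) *\<^sub>R w) w = \<epsilon>"
    using \<open>0 < \<epsilon>\<close> assms(1) by (simp add: dist_norm algebra_simps)
  ultimately show "\<exists>y\<in>S. dist y w < e" using assms(3) by metis
qed

lemma cap_inner:
  fixes y z :: "'a::euclidean_space"
  assumes "y \<in> cap z \<theta>" "norm z = 1" "0 \<le> \<theta>" "\<theta> \<le> pi"
  shows "norm y = 1" "y \<bullet> z \<ge> cos (\<theta>/2)"
proof -
  show ny: "norm y = 1" using assms(1) by (simp add: cap_def pbdry_def)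
  have b: "\<bar>y \<bullet> z\<bar> \<le> 1" using Cauchy_Schwarz_ineq2[of y z] ny assms(2) by simp
  have "arccos (y \<bullet> z) \<le> \<theta>/2" using assms(1) ny assms(2) by (simp add: cap_def eangle_def)
  hence "cos (\<theta>/2) \<le> cos (arccos (y \<bullet> z))"
    using b assms(3,4) arccos_lbound[of "y \<bullet> z"] arccos_ubound[of "y \<bullet> z"]
    by (subst cos_mono_le_eq) auto
  thus "y \<bullet> z \<ge> cos (\<theta>/2)" using b by simp
qed

lemma one_minus_cos: "1 - cos (x::real) \<le> x^2/2"
proof -
  have "cos x = 1 - 2 * sin (x/2) ^ 2" using cos_double_sin[of "x/2"] by simp
  moreover have "\<bar>sin (x/2)\<bar> \<le> \<bar>x/2\<bar>" by (rule abs_sin_x_le_abs_x)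
  hence "sin (x/2) ^ 2 \<le> (x/2)^2" by (metis power2_abs power_mono abs_ge_zero)
  ultimately show ?thesis by (simp add: power_divide)
qed

lemma hdist0:
  fixes y :: "'a::euclidean_space"
  assumes "norm y < 1"
  shows "hdist 0 y \<ge> ln (1 / (2 * (1 - norm y)))"
proof -
  define s where "s = norm y"
  have s: "0 \<le> s" "s < 1" using assms by (auto simp: s_def)
  define X where "X = 1 + 2 * s\<^sup>2 / (1 - s\<^sup>2)"
  have s2: "s^2 < 1" using s by (simp add: power_less_one_iff abs_square_less_1)
  have X1: "X \<ge> 1" using s s2 by (simp add: X_def)
  have "X = (1 + s^2) / (1 - s^2)" using s2 by (simp add: X_def field_simps)
  also have "\<dots> \<ge> 1 / (1 - s^2)" using s2 by (intro divide_right_mono) auto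
  finally have "X \<ge> 1 / (1 - s^2)" .
  moreover have "1 / (1 - s^2) \<ge> 1 / (2 * (1 - s))"
  proof (rule divide_left_mono)
    have "1 - s^2 = (1 - s) * (1 + s)" by (simp add: power2_eq_square algebra_simps)
    also have "\<dots> \<le> (1 - s) * 2" using s by (intro mult_left_mono) auto
    finally show "1 - s^2 \<le> 2 * (1 - s)" by simp
    show "0 < (2 * (1 - s)) * (1 - s^2)" using s s2 by simp
  qed simp
  ultimately have XX: "X \<ge> 1 / (2 * (1 - s))" by linarith
  have "hdist 0 y = arcosh X" by (simp add: hdist_def X_def s_def)
  also have "\<dots> = ln (X + sqrt (X^2 - 1))" using X1 by (simp add: arcosh_real_def)
  also have "\<dots> \<ge> ln X" using X1
    by (subst ln_le_cancel_iff) (auto intro: add_pos_nonneg)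
  finally have "hdist 0 y \<ge> ln X" .
  moreover have "ln X \<ge> ln (1 / (2 * (1 - s)))" using XX s X1 by (subst ln_le_cancel_iff) auto
  ultimately show ?thesis by (simp add: s_def)
qed

lemma norm_sq_exp:
  fixes y c :: "'a::euclidean_space"
  shows "(norm (b *\<^sub>R y - c))\<^sup>2 = b^2 * (norm y)^2 - 2 * b * (y \<bullet> c) + (norm c)^2"
proof -
  have "(norm (b *\<^sub>R y - c))\<^sup>2 = (b *\<^sub>R y - c) \<bullet> (b *\<^sub>R y - c)" by (simp add: power2_norm_eq_inner)
  also have "\<dots> = b^2 * (y \<bullet> y) - 2 * b * (y \<bullet> c) + c \<bullet> c"
    apply (simp add: inner_diff_left inner_diff_right inner_commute[of c y] power2_eq_square)
    by (simp add: right_diff_distrib)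
  finally show ?thesis by (simp add: power2_norm_eq_inner)
qed

lemma sq_sum_le: "((a::real) + b)^2 \<le> 2 * a^2 + 2 * b^2"
proof -
  have "(a+b)^2 + (a-b)^2 = 2*a^2+2*b^2" by (simp add: power2_eq_square algebra_simps)
  moreover have "(a-b)^2 \<ge> 0" by simp
  ultimately show ?thesis by linarith
qed

lemma unit_comb:
  fixes u v :: "'a::euclidean_space"
  assumes uu: "u \<bullet> u = 1" and vv: "v \<bullet> v = 1" and uv: "v \<bullet> u = 0" and s2: "s^2 \<le> 1"
  shows "(s *\<^sub>R u + sqrt (1 - s^2) *\<^sub>R v) \<bullet> (s *\<^sub>R u + sqrt (1 - s^2) *\<^sub>R v) = 1"
    "u \<bullet> (s *\<^sub>R u + sqrt (1 - s^2) *\<^sub>R v) = s"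
proof -
  have sq: "sqrt (1 - s^2) * sqrt (1 - s^2) = 1 - s^2" using s2 by simp
  have uv': "u \<bullet> v = 0" using uv by (simp add: inner_commute)
  show "(s *\<^sub>R u + sqrt (1 - s^2) *\<^sub>R v) \<bullet> (s *\<^sub>R u + sqrt (1 - s^2) *\<^sub>R v) = 1"
    using sq by (simp add: inner_add_left inner_add_right uu vv uv uv' power2_eq_square)
  show "u \<bullet> (s *\<^sub>R u + sqrt (1 - s^2) *\<^sub>R v) = s"
    by (simp add: inner_add_right uu uv')
qed
lemma lin4: "(a::real) \<le> 2 * b + 2 * c \<Longrightarrow> b \<le> t \<Longrightarrow> c \<le> t \<Longrightarrow> a = r \<Longrightarrow> r \<le> 4 * t"
  by linarith

lemma geom:
  fixes I :: "'a::euclidean_space set" and z :: 'a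
  assumes dim: "2 \<le> DIM('a)" and z: "z \<in> pbdry" and th: "0 < \<theta>" "\<theta> \<le> 1/2"
    and isI: "is_I I z \<theta>"
  shows "hbdry I \<noteq> {} \<and> (\<forall>y\<in>hbdry I. hdist 0 y \<ge> ln (1/(6*\<theta>)))"
proof -
  have nz: "norm z = 1" using z by (simp add: pbdry_def)
  have thpi: "\<theta> \<le> pi" using th pi_gt3 by argo
  obtain c \<rho> where r: "\<rho> > 0" and ck: "(norm c)\<^sup>2 = 1 + \<rho>\<^sup>2"
    and I: "I = {x \<in> pball. dist x c < \<rho>} \<or> I = {x \<in> pball. dist x c > \<rho>}"
    using isI by (auto simp: is_I_def tg_hyperball_def)
  have capeq: "closure I \<inter> pbdry = cap z \<theta>" using isI by (simp add: is_I_def)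
  have capmem: "w \<bullet> z \<ge> cos (\<theta>/2)" if "w \<in> closure I" "norm w = 1" for w
  proof -
    have "w \<in> pbdry" using that(2) by (simp add: pbdry_def)
    hence "w \<in> closure I \<inter> pbdry" using that(1) by blast
    hence "w \<in> cap z \<theta>" using capeq by blast
    thus ?thesis using cap_inner(2)[OF _ nz less_imp_le[OF th(1)] thpi] by blast
  qed
  define k where "k = norm c"
  have k2: "k^2 = 1 + \<rho>^2" using ck by (simp add: k_def)
  have k0: "k \<ge> 0" by (simp add: k_def)
  have k1: "k > 1"
  proof -
    have "k^2 > 1^2" using k2 r by simp
    thus ?thesis using k0 power_less_imp_less_base by blast
  qed
  have kr: "k > \<rho>"
  proof -
    have "k^2 > \<rho>^2" using k2 by simp
    thus ?thesis using k0 power_less_imp_less_base by blast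
  qed
  have "\<theta> < pi" using th pi_gt3 by argo
  hence q0: "cos (\<theta>/2) > 0" using th by (intro cos_gt_zero) auto
  show ?thesis
  proof (cases "I = {x \<in> pball. dist x c > \<rho>}")
    case True
    obtain v where v: "norm v = 1" "v \<bullet> z = 0" using unit_orth[OF dim] by blast
    define w where "w = (if v \<bullet> c \<le> 0 then v else -v)"
    have w: "norm w = 1" "w \<bullet> c \<le> 0" "w \<bullet> z = 0" using v by (auto simp: w_def)
    have "w \<in> closure I"
    proof (rule closure_radial[OF w(1), of 1])
      fix \<epsilon> :: real assume e: "0 < \<epsilon>" "\<epsilon> < 1"
      define b where "b = 1 - \<epsilon>"
      have b: "0 < b" "b < 1" using e by (auto simp: b_def)
      have "norm (b *\<^sub>R w) < 1" using b w by simp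
      moreover have "(dist (b *\<^sub>R w) c)^2 > \<rho>^2"
      proof -
        have "(dist (b *\<^sub>R w) c)^2 = b^2 - 2 * b * (w \<bullet> c) + k^2"
          using norm_sq_exp[of b w c] w by (simp add: dist_norm k_def)
        moreover have "b * (w \<bullet> c) \<le> 0" using b w by (simp add: mult_nonneg_nonpos)
        moreover have "b^2 > 0" using b by simp
        ultimately show ?thesis using k2 by argo
      qed
      hence "dist (b *\<^sub>R w) c > \<rho>" using power_less_imp_less_base by fastforce
      ultimately show "(1 - \<epsilon>) *\<^sub>R w \<in> I" using True by (simp add: b_def pball_def)
    qed simp
    hence "w \<bullet> z \<ge> cos (\<theta>/2)" using capmem w by blast
    with w q0 show ?thesis by simp
  next
    case False
    hence II: "I = {x \<in> pball. dist x c < \<rho>}" using I by blast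
    have inmem: "y \<in> closure I" if y: "norm y = 1" "y \<bullet> c > 1" for y
    proof -
      define a where "a = y \<bullet> c"
      show ?thesis
      proof (rule closure_radial[OF y(1), of "min (1/2) (a - 1)"])
        fix \<epsilon> :: real assume e: "0 < \<epsilon>" "\<epsilon> < min (1/2) (a - 1)"
        define b where "b = 1 - \<epsilon>"
        have b: "0 < b" "b < 1" using e by (auto simp: b_def)
        have "norm (b *\<^sub>R y) < 1" using b y by simp
        moreover have "(dist (b *\<^sub>R y) c)^2 < \<rho>^2"
        proof -
          have "(dist (b *\<^sub>R y) c)^2 = b^2 - 2 * b * a + k^2"
            using norm_sq_exp[of b y c] y by (simp add: dist_norm k_def a_def)
          moreover have "b^2 < b" using b by (simp add: power2_eq_square)
          moreover have "b * a > b * (1 + \<epsilon>)" using b e by (intro mult_strict_left_mono) auto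
          moreover have "b * (1 + \<epsilon>) = 1 - \<epsilon>^2" by (simp add: b_def power2_eq_square algebra_simps)
          moreover have "\<epsilon>^2 \<le> \<epsilon> / 2" using e by (simp add: power2_eq_square)
          ultimately show ?thesis using k2 b_def by argo
        qed
        hence "dist (b *\<^sub>R y) c < \<rho>" using r power_less_imp_less_base by fastforce
        ultimately show "(1 - \<epsilon>) *\<^sub>R y \<in> I" using II by (simp add: b_def pball_def)
      qed (use y a_def in auto)
    qed
    define u where "u = c /\<^sub>R k"
    have kinv: "inverse k * k = 1" using k1 by simp
    have "norm u = inverse k * k" using k0 by (simp add: u_def k_def)
    moreover have "u \<bullet> c = inverse k * (k * k)"
      by (simp add: u_def k_def power2_norm_eq_inner[symmetric] power2_eq_square)
    ultimately have u: "norm u = 1" "u \<bullet> c = k" using kinv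
      by (simp_all add: mult.assoc[symmetric])
    obtain v where v: "norm v = 1" "v \<bullet> u = 0" using unit_orth[OF dim] by blast
    have vc: "v \<bullet> c = 0"
    proof -
      have "k * inverse k = 1" using k1 by simp
      hence "c = k *\<^sub>R u" by (simp add: u_def)
      thus ?thesis using v by simp
    qed
    define s where "s = (1 + 1/k) / 2"
    have s: "0 < s" "s < 1" using k1 by (auto simp: s_def field_simps)
    define y2 where "y2 = s *\<^sub>R u + sqrt (1 - s^2) *\<^sub>R v"
    have s2: "s^2 < 1" using s by (simp add: power_less_one_iff abs_square_less_1)
    have uu: "u \<bullet> u = 1" using u by (simp add: power2_norm_eq_inner[symmetric])
    have vv: "v \<bullet> v = 1" using v by (simp add: power2_norm_eq_inner[symmetric])
    have sq: "sqrt (1 - s^2) * sqrt (1 - s^2) = 1 - s^2" using s2 by simp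
    have y2y2: "y2 \<bullet> y2 = 1"
      using unit_comb(1)[OF uu vv v(2) less_imp_le[OF s2]] by (simp add: y2_def)
    have ny2: "norm y2 = 1" using y2y2 by (simp add: norm_eq_sqrt_inner)
    have y2c: "y2 \<bullet> c = s * k" using u vc by (simp add: y2_def inner_add_left)
    have uy2: "u \<bullet> y2 = s" using unit_comb(2)[OF uu vv v(2) less_imp_le[OF s2]] by (simp add: y2_def)
    have "s * k > 1" using k1 by (simp add: s_def field_simps)
    hence y2in: "y2 \<in> closure I" using inmem ny2 y2c by simp
    have uin: "u \<in> closure I" using inmem u k1 by simp
    define q where "q = cos (\<theta>/2)"
    have uz: "u \<bullet> z \<ge> q" using capmem uin u by (simp add: q_def)
    have y2z: "y2 \<bullet> z \<ge> q" using capmem y2in ny2 by (simp add: q_def)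
    have zz: "z \<bullet> z = 1" using nz by (simp add: power2_norm_eq_inner[symmetric])
    have A: "(norm (u - z))^2 \<le> 2 - 2*q"
      using uz uu zz by (simp add: power2_norm_eq_inner inner_diff_left inner_diff_right inner_commute[of z u])
    have B: "(norm (y2 - z))^2 \<le> 2 - 2*q"
      using y2z y2y2 zz by (simp add: power2_norm_eq_inner inner_diff_left inner_diff_right inner_commute[of z y2])
    have Cq: "(norm (u - y2))^2 = 2 - 2 * s"
      using uy2 y2y2 uu by (simp add: power2_norm_eq_inner inner_diff_left inner_diff_right inner_commute[of y2 u])
    have "u - y2 = (u - z) - (y2 - z)" by simp
    hence tri: "norm (u - y2) \<le> norm (u - z) + norm (y2 - z)"
      using norm_triangle_ineq4[of "u - z" "y2 - z"] by simp
    have "(norm (u - y2))^2 \<le> (norm (u - z) + norm (y2 - z))^2"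
      using tri by (simp add: power_mono)
    also have "\<dots> \<le> 2 * (norm (u - z))^2 + 2 * (norm (y2 - z))^2"
      by (rule sq_sum_le)
    finally have "2 - 2 * s \<le> 4 * (2 - 2*q)" using A B Cq lin4 by blast
    moreover have "1 - q \<le> (\<theta>/2)^2/2" unfolding q_def by (rule one_minus_cos)
    ultimately have "1 - s \<le> \<theta>^2 / 2" by (simp add: power_divide)
    moreover have "1 - s = (1 - 1/k) / 2" by (simp add: s_def field_simps)
    ultimately have k3: "1 - 1/k \<le> \<theta>^2" by argo
    have th2: "\<theta>^2 \<le> 1/4" using th power_mono[of \<theta> "1/2" 2] by (simp add: power_divide)
    have "k \<le> 2"
    proof -
      have "1/k \<ge> 3/4" using k3 th2 by argo
      thus ?thesis using k1 by (simp add: field_simps)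
    qed
    have km1: "k - 1 \<le> 2 * \<theta>^2"
    proof -
      have "k - 1 = k * (1 - 1/k)" using k1 by (simp add: field_simps)
      also have "\<dots> \<le> 2 * \<theta>^2" using k3 \<open>k \<le> 2\<close> k1
        by (intro mult_mono) auto
      finally show ?thesis .
    qed
    have "\<rho>^2 \<le> (3*\<theta>)^2"
    proof -
      have "\<rho>^2 = (k - 1) * (k + 1)" using k2 by (simp add: power2_eq_square algebra_simps)
      also have "\<dots> \<le> (2 * \<theta>^2) * 3" using km1 \<open>k \<le> 2\<close> k1
        by (intro mult_mono) auto
      finally have "\<rho>^2 \<le> 6 * \<theta>^2" by simp
      moreover have "\<theta>^2 \<ge> 0" by simp
      ultimately have "\<rho>^2 \<le> 9 * \<theta>^2" by argo
      thus ?thesis by (simp add: power_mult_distrib)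
    qed
    hence r3: "\<rho> \<le> 3*\<theta>" by (rule power2_le_imp_le) (use th in simp)
    have Isub: "I \<subseteq> pball" using II by auto
    have Ine: "I \<noteq> {}"
    proof
      assume "I = {}" then show False using uin by simp
    qed
    hence "pball \<inter> I \<noteq> {}" using Isub by blast
    moreover have "0 \<in> pball - I" using II kr by (simp add: pball_def k_def)
    hence "pball - I \<noteq> {}" by blast
    moreover have "connected (pball :: 'a set)" by (simp add: pball_def)
    ultimately have "pball \<inter> frontier I \<noteq> {}" using connected_Int_frontier by blast
    hence ne: "hbdry I \<noteq> {}" by (simp add: hbdry_def Int_commute)
    have Ic: "I \<subseteq> cball c \<rho>"
    proof
      fix x assume "x \<in> I" hence "dist x c < \<rho>" using II by simp
      thus "x \<in> cball c \<rho>" by (simp add: dist_commute)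
    qed
    hence cc: "closure I \<subseteq> cball c \<rho>" by (simp add: closure_minimal)
    have "hdist 0 y \<ge> ln (1/(6*\<theta>))" if y: "y \<in> hbdry I" for y
    proof -
      have yp: "norm y < 1" using y by (simp add: hbdry_def pball_def)
      have "y \<in> closure I" using y unfolding hbdry_def frontier_def by blast
      hence "y \<in> cball c \<rho>" using cc by blast
      hence "dist c y \<le> \<rho>" by simp
      moreover have "k \<le> norm y + dist c y"
        using norm_triangle_sub[of c y] by (simp add: k_def dist_norm)
      ultimately have "1 - norm y \<le> 3 * \<theta>" using k1 r3 by argo
      hence le: "2 * (1 - norm y) \<le> 6 * \<theta>" by argo
      have p: "0 < 2 * (1 - norm y)" using yp by simp
      have pp: "0 < (6*\<theta>) * (2 * (1 - norm y))" using p th by simp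
      have "1/(6*\<theta>) \<le> 1/(2 * (1 - norm y))"
        using divide_left_mono[OF le zero_le_one pp] .
      moreover have "0 < 1/(6*\<theta>)" using th by simp
      ultimately have "ln (1/(6*\<theta>)) \<le> ln (1/(2 * (1 - norm y)))"
        by (rule ln_mono)
      thus ?thesis using hdist0[OF yp] by argo
    qed
    with ne show ?thesis by blast
  qed
qed

theorem mainTheorem6:
  fixes h h' :: "real \<Rightarrow> real" and lam d0 C3 :: real
  assumes n2: "CARD('n::finite) \<ge> 2"
    and hlam: "0 \<le> lam" "lam \<le> (real CARD('n) - 1)\<^sup>2 / 4"
    and d0: "d0 > 0"
    and deriv1: "\<And>d. d > 0 \<Longrightarrow> (h has_real_derivative h' d) (at d)"
    and ode: "\<And>d. d > 0 \<Longrightarrow>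
       (h' has_real_derivative (- lam * h d - (real CARD('n) - 1) * tanh d * h' d)) (at d)"
    and pos: "\<And>d. d \<ge> d0 \<Longrightarrow> h d > 0"
    and decr: "\<And>d e. d0 \<le> d \<Longrightarrow> d \<le> e \<Longrightarrow> h e \<le> h d"
    and decay: "\<And>d. d > d0 \<Longrightarrow> h d < C3 * exp (- ((real CARD('n) - 1) / 2
        + (real CARD('n) - 1) / 2 * sqrt (1 - 4 * lam / (real CARD('n) - 1)\<^sup>2)) * d)"
  shows "\<exists>C4 > 0. \<exists>\<theta>1 > 0. \<forall>(z :: real^'n) \<theta> I. z \<in> pbdry \<longrightarrow> 0 < \<theta> \<longrightarrow> \<theta> < \<theta>1 \<longrightarrow>
           is_I I z \<theta> \<longrightarrow> 0 < wI h d0 I 0 \<and> wI h d0 I 0 \<le> C4 * \<theta> powr ((real CARD('n) - 1) / 2)"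
  proof -
  define n where "n = real CARD('n)"
  define m where "m = (n - 1) / 2"
  have n2': "n \<ge> 2" using n2 by (simp add: n_def)
  have m0: "m > 0" using n2' by (simp add: m_def)
  have nn: "(n - 1)^2 > 0" using n2' by simp
  have "4 * lam / (n - 1)^2 \<le> 1"
    using hlam(2) nn by (simp add: n_def divide_le_eq)
  hence sq0: "sqrt (1 - 4 * lam / (n - 1)^2) \<ge> 0" by simp
  define r where "r = (n - 1) / 2 + (n - 1) / 2 * sqrt (1 - 4 * lam / (n - 1)^2)"
  have rm: "r \<ge> m" using sq0 n2' by (simp add: r_def m_def)
  have hd0: "h d0 > 0" using pos[of d0] by simp
  have C3: "C3 > 0"
  proof -
    have "0 < h (d0 + 1)" using pos[of "d0+1"] by simp
    also have "\<dots> < C3 * exp (- r * (d0 + 1))" using decay[of "d0+1"] by (simp add: r_def n_def)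
    finally show ?thesis by (simp add: zero_less_mult_iff)
  qed
  define C4 where "C4 = C3 * 6 powr m / h d0"
  have C4: "C4 > 0" using C3 hd0 by (simp add: C4_def)
  define th1 where "th1 = min (1/2) (exp (- d0) / 6)"
  have th1: "th1 > 0" by (simp add: th1_def)
  have dim: "2 \<le> DIM(real^'n)" using n2 by simp
  have main: "0 < wI h d0 I 0 \<and> wI h d0 I 0 \<le> C4 * \<theta> powr m"
    if z: "z \<in> pbdry" and th: "0 < \<theta>" "\<theta> < th1" and isI: "is_I I z \<theta>" for z :: "real^'n" and \<theta> I
  proof -
    have thh: "\<theta> \<le> 1/2" using th by (simp add: th1_def)
    have G: "hbdry I \<noteq> {} \<and> (\<forall>y\<in>hbdry I. hdist 0 y \<ge> ln (1/(6*\<theta>)))"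
      by (rule geom[OF dim z th(1) thh isI])
    define D where "D = ln (1/(6*\<theta>))"
    define \<sigma> where "\<sigma> = sigma I 0"
    have \<sigma>: "\<sigma> = (INF y\<in>hbdry I. hdist 0 y)" by (simp add: \<sigma>_def sigma_def)
    have sD: "\<sigma> \<ge> D" unfolding \<sigma> D_def using G by (intro cINF_greatest) auto
    have "6 * \<theta> < exp (- d0)" using th by (simp add: th1_def)
    hence "ln (6 * \<theta>) < ln (exp (- d0))" using ln_less_cancel_iff[of "6*\<theta>" "exp (-d0)"] th by simp
    hence l6: "ln (6 * \<theta>) < - d0" by (simp only: ln_exp)
    have Deq: "D = - ln (6 * \<theta>)" unfolding D_def using ln_div[of 1 "6*\<theta>"] th by simp
    have Dd0: "D > d0" using l6 Deq by argo
    have hs: "h \<sigma> > 0" using pos[of \<sigma>] sD Dd0 by argo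
    have w: "wI h d0 I 0 = h \<sigma> / h d0" by (simp add: wI_def \<sigma>_def)
    have "h \<sigma> \<le> h D" using decr[of D \<sigma>] Dd0 sD by argo
    also have "\<dots> < C3 * exp (- r * D)" using decay[OF Dd0] by (simp add: r_def n_def)
    also have "\<dots> \<le> C3 * exp (- m * D)" using C3 rm Dd0 d0
      by (intro mult_left_mono) (simp_all add: mult_right_mono)
    also have "exp (- m * D) = (6 * \<theta>) powr m"
      using th by (simp add: Deq powr_def mult.commute)
    also have "\<dots> = 6 powr m * \<theta> powr m" using th by (simp add: powr_mult)
    finally have "h \<sigma> \<le> C3 * 6 powr m * \<theta> powr m" by simp
    hence "h \<sigma> / h d0 \<le> (C3 * 6 powr m * \<theta> powr m) / h d0" using hd0 by (rule divide_right_mono[OF _ less_imp_le])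
    also have "\<dots> = C4 * \<theta> powr m" by (simp add: C4_def)
    finally have "h \<sigma> / h d0 \<le> C4 * \<theta> powr m" .
    thus ?thesis using w hs hd0 by simp
  qed
  show ?thesis
    using C4 th1 main unfolding m_def n_def by blast
qed

end
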